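(* Let $d\ge 1$ and $n,k\ge 0$ be integers. Let $\mathcal{L}_{\leq d}(n,k)$ be the set of lonesum $0$-$1$ matrices with $n$ rows and $k$ columns that have no all-zero row and no all-zero column, and in which at most $d$ columns are of the same type and at most $d$ rows are of the same type. Then \[ |\mathcal{L}_{\leq d}(n,k)|=\sum_{m=0}^{\min(n,k)} m!\,S_{\leq d}(n,m)\; m!\,S_{\leq d}(k,m). \]
   Context: A $0$-$1$ matrix is lonesum if it is uniquely determined by its vector of row sums and its vector of column sums; equivalently, it contains no $2\times 2$ submatrix (rows $i<i'$, columns $j<j'$) equal to $\begin{pmatrix}1&0\\0&1\end{pmatrix}$ or $\begin{pmatrix}0&1\\1&0\end{pmatrix}$. The type of a column (resp. row) is the column (resp. row) vector itself; two columns have the same type iff they are identical vectors. $S_{\leq d}(n,m)$ denotes the restricted Stirling number of the second kind: the number of partitions of an $n$-element set into $m$ non-empty blocks each of size at most $d$ (with $S_{\le d}(0,0)=1$). *)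

theory Defs
  imports "HOL-Library.FuncSet" "HOL-Library.Disjoint_Sets"
begin

definition zo_matrices :: "nat \<Rightarrow> nat \<Rightarrow> (nat \<Rightarrow> nat \<Rightarrow> nat) set" where
  "zo_matrices n k = ({0..<n} \<rightarrow>\<^sub>E ({0..<k} \<rightarrow>\<^sub>E {0, 1}))"

definition row_sums :: "nat \<Rightarrow> (nat \<Rightarrow> nat \<Rightarrow> nat) \<Rightarrow> nat \<Rightarrow> nat" where
  "row_sums k M = (\<lambda>i. \<Sum>j<k. M i j)"

definition col_sums :: "nat \<Rightarrow> (nat \<Rightarrow> nat \<Rightarrow> nat) \<Rightarrow> nat \<Rightarrow> nat" where
  "col_sums n M = (\<lambda>j. \<Sum>i<n. M i j)"

definition lonesum :: "nat \<Rightarrow> nat \<Rightarrow> (nat \<Rightarrow> nat \<Rightarrow> nat) \<Rightarrow> bool" where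
  "lonesum n k M \<longleftrightarrow>
     (\<forall>N \<in> zo_matrices n k.
        (\<forall>i<n. row_sums k N i = row_sums k M i) \<and> (\<forall>j<k. col_sums n N j = col_sums n M j)
        \<longrightarrow> N = M)"

definition same_col_type :: "nat \<Rightarrow> (nat \<Rightarrow> nat \<Rightarrow> nat) \<Rightarrow> nat \<Rightarrow> nat \<Rightarrow> bool" where
  "same_col_type n M j j' \<longleftrightarrow> (\<forall>i<n. M i j = M i j')"

definition same_row_type :: "nat \<Rightarrow> (nat \<Rightarrow> nat \<Rightarrow> nat) \<Rightarrow> nat \<Rightarrow> nat \<Rightarrow> bool" where
  "same_row_type k M i i' \<longleftrightarrow> (\<forall>j<k. M i j = M i' j)"

definition L_le :: "nat \<Rightarrow> nat \<Rightarrow> nat \<Rightarrow> (nat \<Rightarrow> nat \<Rightarrow> nat) set" where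
  "L_le d n k = {M \<in> zo_matrices n k.
      lonesum n k M \<and>
      (\<forall>i<n. \<exists>j<k. M i j \<noteq> 0) \<and>
      (\<forall>j<k. \<exists>i<n. M i j \<noteq> 0) \<and>
      (\<forall>j<k. card {j'. j' < k \<and> same_col_type n M j j'} \<le> d) \<and>
      (\<forall>i<n. card {i'. i' < n \<and> same_row_type k M i i'} \<le> d)}"

definition stirling_le :: "nat \<Rightarrow> nat \<Rightarrow> nat \<Rightarrow> nat" where
  "stirling_le d n m = card {P. partition_on {0..<n} P \<and> card P = m \<and> (\<forall>B\<in>P. card B \<le> d)}"

end

theory Submission
  imports Defs "HOL-Combinatorics.Permutations"
begin


lemma card_bij_ext:
  assumes fA: "finite A" and fB: "finite B" and c: "card A = card B"
  shows "card {e \<in> A \<rightarrow>\<^sub>E B. bij_betw e A B} = fact (card A)"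
proof -
  obtain e0 where e0: "bij_betw e0 A B" using finite_same_card_bij[OF fA fB c] by blast
  let ?phi = "\<lambda>\<sigma>. restrict (e0 \<circ> \<sigma>) A"
  let ?psi = "\<lambda>e x. if x \<in> A then inv_into A e0 (e x) else x"
  have "bij_betw ?phi {p. p permutes A} {e \<in> A \<rightarrow>\<^sub>E B. bij_betw e A B}"
  proof (rule bij_betw_byWitness)
    show "\<forall>a\<in>{p. p permutes A}. ?psi (?phi a) = a"
    proof
      fix s assume "s \<in> {p. p permutes A}"
      hence s: "s permutes A" by simp
      show "?psi (?phi s) = s"
      proof
        fix x show "?psi (?phi s) x = s x"
          using s e0 permutes_in_image[OF s] permutes_not_in[OF s]
          by (auto simp: bij_betw_def inv_into_f_f)
      qed
    qed
    show "\<forall>a'\<in>{e \<in> A \<rightarrow>\<^sub>E B. bij_betw e A B}. ?phi (?psi a') = a'"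
    proof
      fix e assume "e \<in> {e \<in> A \<rightarrow>\<^sub>E B. bij_betw e A B}"
      hence e: "e \<in> A \<rightarrow>\<^sub>E B" by simp
      show "?phi (?psi e) = e"
      proof
        fix x show "?phi (?psi e) x = e x"
        proof (cases "x \<in> A")
          case True
          then have "e x \<in> e0 ` A" using e e0 by (auto simp: bij_betw_def)
          then show ?thesis using True by (simp add: f_inv_into_f)
        next
          case False then show ?thesis using e by (simp add: PiE_def extensional_def)
        qed
      qed
    qed
    show "?phi ` {p. p permutes A} \<subseteq> {e \<in> A \<rightarrow>\<^sub>E B. bij_betw e A B}"
    proof clarify
      fix s assume s: "s permutes A"
      have b: "bij_betw (e0 \<circ> s) A B" using bij_betw_trans[OF permutes_imp_bij[OF s] e0] .
      have "bij_betw (?phi s) A B" using b by (rule bij_betw_cong[THEN iffD1, rotated]) simp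
      moreover have "?phi s \<in> A \<rightarrow>\<^sub>E B" using b by (auto simp: bij_betw_def)
      ultimately show "?phi s \<in> A \<rightarrow>\<^sub>E B \<and> bij_betw (?phi s) A B" by simp
    qed
    show "?psi ` {e \<in> A \<rightarrow>\<^sub>E B. bij_betw e A B} \<subseteq> {p. p permutes A}"
    proof clarify
      fix e assume e: "e \<in> A \<rightarrow>\<^sub>E B" "bij_betw e A B"
      have b: "bij_betw (inv_into A e0 \<circ> e) A A"
        using bij_betw_trans[OF e(2) bij_betw_inv_into[OF e0]] .
      have "bij_betw (?psi e) A A" using b by (rule bij_betw_cong[THEN iffD1, rotated]) simp
      then show "?psi e permutes A" by (rule bij_imp_permutes) simp
    qed
  qed
  then have "card {e \<in> A \<rightarrow>\<^sub>E B. bij_betw e A B} = card {p. p permutes A}"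
    by (simp add: bij_betw_same_card)
  also have "\<dots> = fact (card A)" using card_permutations[OF refl fA] .
  finally show ?thesis .
qed



definition Surj :: "nat \<Rightarrow> nat \<Rightarrow> nat \<Rightarrow> (nat \<Rightarrow> nat) set" where
  "Surj d n m = {f \<in> {0..<n} \<rightarrow>\<^sub>E {0..<m}. f ` {0..<n} = {0..<m} \<and>
      (\<forall>l<m. card {i. i < n \<and> f i = l} \<le> d)}"

definition Parts :: "nat \<Rightarrow> nat \<Rightarrow> nat \<Rightarrow> nat set set set" where
  "Parts d n m = {P. partition_on {0..<n} P \<and> card P = m \<and> (\<forall>B\<in>P. card B \<le> d)}"

definition BijE :: "nat \<Rightarrow> nat set set \<Rightarrow> (nat \<Rightarrow> nat set) set" where
  "BijE m P = {e \<in> {0..<m} \<rightarrow>\<^sub>E P. bij_betw e {0..<m} P}"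

lemma finite_Parts: "finite (Parts d n m)"
proof -
  have "Parts d n m \<subseteq> Pow (Pow {0..<n})"
    by (auto simp: Parts_def partition_on_def)
  then show ?thesis by (rule finite_subset) simp
qed

lemma Parts_sub: "P \<in> Parts d n m \<Longrightarrow> B \<in> P \<Longrightarrow> B \<subseteq> {0..<n}"
  by (auto simp: Parts_def partition_on_def)

lemma Parts_finite: "P \<in> Parts d n m \<Longrightarrow> finite P"
  by (rule finite_subset[of P "Pow {0..<n}"]) (auto dest: Parts_sub)

lemma Parts_cover: "P \<in> Parts d n m \<Longrightarrow> i < n \<Longrightarrow> \<exists>B\<in>P. i \<in> B"
  unfolding Parts_def partition_on_def by auto

lemma Parts_ne: "P \<in> Parts d n m \<Longrightarrow> B \<in> P \<Longrightarrow> B \<noteq> {}"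
  unfolding Parts_def partition_on_def by auto

lemma Parts_card: "P \<in> Parts d n m \<Longrightarrow> B \<in> P \<Longrightarrow> card B \<le> d"
  unfolding Parts_def by auto

lemma Parts_disj: "P \<in> Parts d n m \<Longrightarrow> B \<in> P \<Longrightarrow> B' \<in> P \<Longrightarrow> B \<noteq> B' \<Longrightarrow> B \<inter> B' = {}"
  unfolding Parts_def partition_on_def by (auto dest: disjointD)

lemma BijE_in: "e \<in> BijE m P \<Longrightarrow> l < m \<Longrightarrow> e l \<in> P"
  unfolding BijE_def by auto

lemma BijE_onto: "e \<in> BijE m P \<Longrightarrow> B \<in> P \<Longrightarrow> \<exists>l<m. e l = B"
  unfolding BijE_def bij_betw_def by force

lemma BijE_inj: "e \<in> BijE m P \<Longrightarrow> l < m \<Longrightarrow> l' < m \<Longrightarrow> e l = e l' \<Longrightarrow> l = l'"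
  unfolding BijE_def bij_betw_def inj_on_def by auto

lemma BijE_ext: "e \<in> BijE m P \<Longrightarrow> \<not> l < m \<Longrightarrow> e l = undefined"
  unfolding BijE_def by auto

lemma BijE_uniq:
  assumes "P \<in> Parts d n m" "e \<in> BijE m P" "l < m" "l' < m" "i \<in> e l" "i \<in> e l'"
  shows "l = l'"
proof (rule ccontr)
  assume "l \<noteq> l'"
  then have "e l \<noteq> e l'" using BijE_inj[OF assms(2-4)] by blast
  then have "e l \<inter> e l' = {}" using Parts_disj[OF assms(1) BijE_in[OF assms(2,3)] BijE_in[OF assms(2,4)]] by blast
  then show False using assms(5,6) by blast
qed

lemma BijE_the:
  assumes "P \<in> Parts d n m" "e \<in> BijE m P" "i < n"
  shows "(THE l. l < m \<and> i \<in> e l) < m \<and> i \<in> e (THE l. l < m \<and> i \<in> e l)"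
proof -
  obtain B where B: "B \<in> P" "i \<in> B" using Parts_cover[OF assms(1,3)] by blast
  obtain l where l: "l < m" "e l = B" using BijE_onto[OF assms(2) B(1)] by blast
  have "(THE l. l < m \<and> i \<in> e l) = l"
  proof (rule the_equality)
    show "l < m \<and> i \<in> e l" using l B by simp
    fix l' assume "l' < m \<and> i \<in> e l'"
    then show "l' = l" using BijE_uniq[OF assms(1,2), of l' l i] l B by auto
  qed
  then show ?thesis using l B by simp
qed

lemma BijE_fib:
  assumes "P \<in> Parts d n m" "e \<in> BijE m P" "l < m"
  shows "{i. i < n \<and> restrict (\<lambda>i. THE l. l < m \<and> i \<in> e l) {0..<n} i = l} = e l"
proof (rule set_eqI, rule iffI)
  fix i assume "i \<in> {i. i < n \<and> restrict (\<lambda>i. THE l. l < m \<and> i \<in> e l) {0..<n} i = l}"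
  then have i: "i < n" and t: "(THE l. l < m \<and> i \<in> e l) = l" by auto
  show "i \<in> e l" using BijE_the[OF assms(1,2) i] t by simp
next
  fix i assume i: "i \<in> e l"
  have "i < n" using i Parts_sub[OF assms(1) BijE_in[OF assms(2,3)]] by auto
  moreover have "(THE l. l < m \<and> i \<in> e l) = l"
    using BijE_the[OF assms(1,2) \<open>i < n\<close>] BijE_uniq[OF assms(1,2) _ assms(3), of _ i] i by blast
  ultimately show "i \<in> {i. i < n \<and> restrict (\<lambda>i. THE l. l < m \<and> i \<in> e l) {0..<n} i = l}" by simp
qed

lemma card_Surj: "card (Surj d n m) = fact m * stirling_le d n m"
proof -
  let ?fib = "\<lambda>f l. {i. i < n \<and> f i = l}"
  let ?al = "\<lambda>f. (?fib f ` {0..<m}, restrict (?fib f) {0..<m})"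
  let ?be = "\<lambda>(P::nat set set, e::nat \<Rightarrow> nat set). restrict (\<lambda>i. THE l. l < m \<and> i \<in> e l) {0..<n}"
  have bij: "bij_betw ?al (Surj d n m) (Sigma (Parts d n m) (BijE m))"
  proof (rule bij_betw_byWitness)
    show "\<forall>f\<in>Surj d n m. ?be (?al f) = f"
    proof
      fix f assume f: "f \<in> Surj d n m"
      show "?be (?al f) = f"
      proof
        fix i show "?be (?al f) i = f i"
        proof (cases "i < n")
          case True
          then have "f i < m" using f by (auto simp: Surj_def)
          then have "(THE l. l < m \<and> i \<in> restrict (?fib f) {0..<m} l) = f i"
            using True by (intro the_equality) auto
          then show ?thesis using True by simp
        next
          case False then show ?thesis using f by (auto simp: Surj_def PiE_def extensional_def)
        qed
      qed
    qed
    show "\<forall>pe\<in>Sigma (Parts d n m) (BijE m). ?al (?be pe) = pe"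
    proof
      fix pe assume "pe \<in> Sigma (Parts d n m) (BijE m)"
      then obtain P e where pe: "pe = (P, e)" and P: "P \<in> Parts d n m" and e: "e \<in> BijE m P"
        by auto
      have fibeq: "?fib (?be (P, e)) l = e l" if l: "l < m" for l
        using BijE_fib[OF P e l] by simp
      have "restrict (?fib (?be (P, e))) {0..<m} = e"
      proof
        fix l show "restrict (?fib (?be (P, e))) {0..<m} l = e l"
          using fibeq[of l] BijE_ext[OF e, of l] by (cases "l < m") auto
      qed
      moreover have "?fib (?be (P, e)) ` {0..<m} = P"
      proof -
        have "?fib (?be (P, e)) ` {0..<m} = e ` {0..<m}" using fibeq by auto
        then show ?thesis using e by (simp add: BijE_def bij_betw_def)
      qed
      ultimately show "?al (?be pe) = pe" using pe by simp
    qed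
    show "?al ` Surj d n m \<subseteq> Sigma (Parts d n m) (BijE m)"
    proof (rule subsetI)
      fix x assume "x \<in> ?al ` Surj d n m"
      then obtain f where x: "x = ?al f" and f: "f \<in> Surj d n m" by blast
      have fm: "\<And>i. i < n \<Longrightarrow> f i < m" using f by (auto simp: Surj_def)
      have ne: "?fib f l \<noteq> {}" if "l < m" for l
      proof -
        have "l \<in> f ` {0..<n}" using f that by (auto simp: Surj_def)
        then show ?thesis by auto
      qed
      have inj: "inj_on (?fib f) {0..<m}"
      proof (rule inj_onI)
        fix l l' assume l: "l \<in> {0..<m}" and "?fib f l = ?fib f l'"
        obtain i where "i \<in> ?fib f l" using ne[of l] l by auto
        then have "i \<in> ?fib f l'" using \<open>?fib f l = ?fib f l'\<close> by simp
        then show "l = l'" using \<open>i \<in> ?fib f l\<close> by simp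
      qed
      have "partition_on {0..<n} (?fib f ` {0..<m})"
      proof (rule partition_onI)
        show "\<Union> (?fib f ` {0..<m}) = {0..<n}"
        proof
          show "\<Union> (?fib f ` {0..<m}) \<subseteq> {0..<n}" by auto
          show "{0..<n} \<subseteq> \<Union> (?fib f ` {0..<m})"
          proof
            fix i assume "i \<in> {0..<n}"
            then have "i \<in> ?fib f (f i)" "f i \<in> {0..<m}" using fm by auto
            then show "i \<in> \<Union> (?fib f ` {0..<m})" by blast
          qed
        qed
        fix p q assume "p \<in> ?fib f ` {0..<m}" "q \<in> ?fib f ` {0..<m}" "p \<noteq> q"
        then obtain l l' where "p = ?fib f l" "q = ?fib f l'" "l \<noteq> l'" by blast
        then show "disjnt p q" by (auto simp: disjnt_def)
      next
        show "{} \<notin> ?fib f ` {0..<m}"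
        proof
          assume "{} \<in> ?fib f ` {0..<m}"
          then obtain l where E: "{} = ?fib f l" and l: "l \<in> {0..<m}" by (rule imageE)
          then show False using ne[of l] by (metis atLeastLessThan_iff)
        qed
      qed
      moreover have "card (?fib f ` {0..<m}) = m" using inj by (simp add: card_image)
      moreover have "\<forall>B\<in>?fib f ` {0..<m}. card B \<le> d" using f by (auto simp: Surj_def)
      ultimately have "?fib f ` {0..<m} \<in> Parts d n m" by (simp add: Parts_def)
      moreover have "restrict (?fib f) {0..<m} \<in> BijE m (?fib f ` {0..<m})"
      proof -
        have "bij_betw (restrict (?fib f) {0..<m}) {0..<m} (?fib f ` {0..<m})"
          using inj by (simp add: bij_betw_def inj_on_def)
        then show ?thesis by (auto simp: BijE_def)
      qed
      ultimately show "x \<in> Sigma (Parts d n m) (BijE m)" using x by simp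
    qed
    show "?be ` Sigma (Parts d n m) (BijE m) \<subseteq> Surj d n m"
    proof (rule subsetI)
      fix x assume "x \<in> ?be ` Sigma (Parts d n m) (BijE m)"
      then obtain P e where x: "x = ?be (P, e)" and P: "P \<in> Parts d n m" and e: "e \<in> BijE m P"
        by auto
      let ?g = "restrict (\<lambda>i. THE l. l < m \<and> i \<in> e l) {0..<n}"
      have gi: "?g i < m" if "i < n" for i
        using BijE_the[OF P e that] that by simp
      have fib: "{i. i < n \<and> ?g i = l} = e l" if l: "l < m" for l
        using BijE_fib[OF P e l] by simp
      have "?g \<in> {0..<n} \<rightarrow>\<^sub>E {0..<m}" using gi by auto
      moreover have "?g ` {0..<n} = {0..<m}"
      proof
        show "?g ` {0..<n} \<subseteq> {0..<m}" using gi by auto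
        show "{0..<m} \<subseteq> ?g ` {0..<n}"
        proof
          fix l assume l: "l \<in> {0..<m}"
          then have "e l \<noteq> {}" using Parts_ne[OF P BijE_in[OF e]] by simp
          then obtain i where "i \<in> e l" by auto
          then have "i \<in> {i. i < n \<and> ?g i = l}" using fib l by auto
          then show "l \<in> ?g ` {0..<n}" by force
        qed
      qed
      moreover have "\<forall>l<m. card {i. i < n \<and> ?g i = l} \<le> d"
        using fib Parts_card[OF P BijE_in[OF e]] by simp
      ultimately have "?g \<in> Surj d n m" unfolding Surj_def by blast
      then show "x \<in> Surj d n m" using x by simp
    qed
  qed
  have "card (Surj d n m) = card (Sigma (Parts d n m) (BijE m))"
    using bij by (rule bij_betw_same_card)
  also have "\<dots> = (\<Sum>P\<in>Parts d n m. card (BijE m P))"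
  proof (rule card_SigmaI)
    show "finite (Parts d n m)" by (rule finite_Parts)
    show "\<forall>P\<in>Parts d n m. finite (BijE m P)"
    proof
      fix P assume "P \<in> Parts d n m"
      then have "finite P" by (rule Parts_finite)
      then have "finite ({0..<m} \<rightarrow>\<^sub>E P)" by (simp add: finite_PiE)
      then show "finite (BijE m P)" unfolding BijE_def by (rule finite_subset[rotated]) auto
    qed
  qed
  also have "\<dots> = (\<Sum>P\<in>Parts d n m. fact m)"
  proof (rule sum.cong[OF refl])
    fix P assume P: "P \<in> Parts d n m"
    have "card (BijE m P) = fact (card {0..<m})"
      unfolding BijE_def using P Parts_finite[OF P] by (intro card_bij_ext) (auto simp: Parts_def)
    then show "card (BijE m P) = fact m" by simp
  qed
  also have "\<dots> = fact m * stirling_le d n m"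
    by (simp add: stirling_le_def Parts_def)
  finally show ?thesis .
qed



definition Phi :: "nat \<Rightarrow> nat \<Rightarrow> (nat \<Rightarrow> nat) \<Rightarrow> (nat \<Rightarrow> nat) \<Rightarrow> nat \<Rightarrow> nat \<Rightarrow> nat" where
  "Phi n k r c = (\<lambda>i\<in>{0..<n}. \<lambda>j\<in>{0..<k}. if c j \<le> r i then 1 else 0)"

lemma Phi_val: "i < n \<Longrightarrow> j < k \<Longrightarrow> Phi n k r c i j = (if c j \<le> r i then 1 else 0)"
  by (simp add: Phi_def)

lemma Phi_zo: "Phi n k r c \<in> zo_matrices n k"
  by (auto simp: Phi_def zo_matrices_def)

lemma zo_eqI:
  assumes "N \<in> zo_matrices n k" "M \<in> zo_matrices n k" "\<And>i j. i < n \<Longrightarrow> j < k \<Longrightarrow> N i j = M i j"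
  shows "N = M"
proof
  fix i show "N i = M i"
  proof (cases "i < n")
    case True
    show ?thesis
    proof
      fix j show "N i j = M i j"
      proof (cases "j < k")
        case True then show ?thesis using assms(3) \<open>i < n\<close> by simp
      next
        case False
        have i: "i \<in> {0..<n}" using \<open>i < n\<close> by simp
        have "N i \<in> {0..<k} \<rightarrow>\<^sub>E {0,1}" "M i \<in> {0..<k} \<rightarrow>\<^sub>E {0,1}"
          using PiE_mem[OF assms(1)[unfolded zo_matrices_def] i] PiE_mem[OF assms(2)[unfolded zo_matrices_def] i]
          by auto
        then show ?thesis using False by (auto simp: PiE_def extensional_def)
      qed
    qed
  next
    case False then show ?thesis using assms(1,2) by (auto simp: zo_matrices_def PiE_def extensional_def)
  qed
qed

lemma zo_val: "M \<in> zo_matrices n k \<Longrightarrow> i < n \<Longrightarrow> j < k \<Longrightarrow> M i j = 0 \<or> M i j = 1"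
  by (auto simp: zo_matrices_def PiE_def Pi_def)

lemma Phi_lonesum: "lonesum n k (Phi n k r c)"
  unfolding lonesum_def
proof (intro ballI impI)
  let ?M = "Phi n k r c"
  fix N assume N: "N \<in> zo_matrices n k"
    and sums: "(\<forall>i<n. row_sums k N i = row_sums k ?M i) \<and> (\<forall>j<k. col_sums n N j = col_sums n ?M j)"
  define D where "D i j = int (?M i j) - int (N i j)" for i j
  define w where "w i j = 2 * int (r i) - 2 * int (c j) + 1" for i j
  have rowD: "(\<Sum>j<k. D i j) = 0" if "i < n" for i
  proof -
    have "(\<Sum>j<k. N i j) = (\<Sum>j<k. ?M i j)" using sums that by (simp add: row_sums_def)
    then have "(\<Sum>j<k. int (N i j)) = (\<Sum>j<k. int (?M i j))" by (metis of_nat_sum)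
    then show ?thesis by (simp add: D_def sum_subtractf)
  qed
  have colD: "(\<Sum>i<n. D i j) = 0" if "j < k" for j
  proof -
    have "(\<Sum>i<n. N i j) = (\<Sum>i<n. ?M i j)" using sums that by (simp add: col_sums_def)
    then have "(\<Sum>i<n. int (N i j)) = (\<Sum>i<n. int (?M i j))" by (metis of_nat_sum)
    then show ?thesis by (simp add: D_def sum_subtractf)
  qed
  have total: "(\<Sum>i<n. \<Sum>j<k. D i j * w i j) = 0"
  proof -
    have e1: "(\<Sum>i<n. \<Sum>j<k. D i j * w i j) =
        (\<Sum>i<n. \<Sum>j<k. 2 * int (r i) * D i j) - (\<Sum>i<n. \<Sum>j<k. 2 * int (c j) * D i j)
        + (\<Sum>i<n. \<Sum>j<k. D i j)"
      by (simp add: w_def algebra_simps sum.distrib sum_subtractf)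
    have e2: "(\<Sum>i<n. \<Sum>j<k. 2 * int (r i) * D i j) = (\<Sum>i<n. 2 * int (r i) * (\<Sum>j<k. D i j))"
      by (simp add: sum_distrib_left)
    have e3: "(\<Sum>i<n. \<Sum>j<k. 2 * int (c j) * D i j) = (\<Sum>j<k. 2 * int (c j) * (\<Sum>i<n. D i j))"
      by (subst sum.swap) (simp add: sum_distrib_left)
    have "(\<Sum>i<n. \<Sum>j<k. D i j * w i j) =
        (\<Sum>i<n. 2 * int (r i) * (\<Sum>j<k. D i j)) - (\<Sum>j<k. 2 * int (c j) * (\<Sum>i<n. D i j))
        + (\<Sum>i<n. (\<Sum>j<k. D i j))" using e1 e2 e3 by simp
    also have "\<dots> = 0" using rowD colD by simp
    finally show ?thesis .
  qed
  have nonneg: "D i j * w i j \<ge> 0" if "i < n" "j < k" for i j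
  proof -
    have "N i j = 0 \<or> N i j = 1" using zo_val[OF N that] .
    then show ?thesis using that by (auto simp: D_def w_def Phi_val)
  qed
  have all0: "\<forall>i\<in>{..<n}. (\<Sum>j<k. D i j * w i j) = 0"
    using total by (subst (asm) sum_nonneg_eq_0_iff) (auto intro!: sum_nonneg nonneg)
  have z: "D i j * w i j = 0" if "i < n" "j < k" for i j
  proof -
    have "(\<Sum>j<k. D i j * w i j) = 0" using all0 that by simp
    then have "\<forall>j\<in>{..<k}. D i j * w i j = 0"
      using sum_nonneg_eq_0_iff[of "{..<k}" "\<lambda>j. D i j * w i j"] nonneg[OF that(1)] by auto
    then show ?thesis using that by simp
  qed
  have "N i j = ?M i j" if "i < n" "j < k" for i j
  proof -
    have "w i j \<noteq> 0" unfolding w_def by presburger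
    then have "D i j = 0" using z[OF that] by simp
    then show ?thesis by (simp add: D_def)
  qed
  then show "N = ?M" using zo_eqI[OF N Phi_zo] by blast
qed


definition SurjA :: "nat \<Rightarrow> nat \<Rightarrow> (nat \<Rightarrow> nat) \<Rightarrow> bool" where
  "SurjA n m f \<longleftrightarrow> f \<in> {0..<n} \<rightarrow>\<^sub>E {0..<m} \<and> f ` {0..<n} = {0..<m}"

lemma SurjA_lt: "SurjA n m f \<Longrightarrow> i < n \<Longrightarrow> f i < m"
  unfolding SurjA_def by auto

lemma SurjA_ex: "SurjA n m f \<Longrightarrow> l < m \<Longrightarrow> \<exists>i<n. f i = l"
  unfolding SurjA_def by (metis atLeastLessThan_iff imageE zero_le)

lemma SurjA_ext: "SurjA n m f \<Longrightarrow> \<not> i < n \<Longrightarrow> f i = undefined"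
  unfolding SurjA_def by auto

definition rowset :: "nat \<Rightarrow> (nat \<Rightarrow> nat \<Rightarrow> nat) \<Rightarrow> nat \<Rightarrow> nat set" where
  "rowset k M i = {j. j < k \<and> M i j \<noteq> 0}"

definition Fam :: "nat \<Rightarrow> nat \<Rightarrow> (nat \<Rightarrow> nat \<Rightarrow> nat) \<Rightarrow> nat set set" where
  "Fam n k M = rowset k M ` {0..<n}"

definition rk :: "nat \<Rightarrow> nat \<Rightarrow> (nat \<Rightarrow> nat \<Rightarrow> nat) \<Rightarrow> nat set \<Rightarrow> nat" where
  "rk n k M X = card {Y \<in> Fam n k M. Y \<subset> X}"

definition gm :: "nat \<Rightarrow> nat \<Rightarrow> (nat \<Rightarrow> nat \<Rightarrow> nat) \<Rightarrow> nat \<Rightarrow> nat" where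
  "gm n k M j = card {Y \<in> Fam n k M. j \<notin> Y}"

definition Psi :: "nat \<Rightarrow> nat \<Rightarrow> (nat \<Rightarrow> nat \<Rightarrow> nat) \<Rightarrow> nat \<times> (nat \<Rightarrow> nat) \<times> (nat \<Rightarrow> nat)" where
  "Psi n k M = (card (Fam n k M), restrict (\<lambda>i. rk n k M (rowset k M i)) {0..<n}, restrict (gm n k M) {0..<k})"

lemma finite_Fam: "finite (Fam n k M)"
  unfolding Fam_def by simp

locale phi_ctx =
  fixes n k m :: nat and r c :: "nat \<Rightarrow> nat"
  assumes r: "SurjA n m r" and c: "SurjA k m c"
begin

abbreviation "M \<equiv> Phi n k r c"

definition T :: "nat \<Rightarrow> nat set" where "T l = {j. j < k \<and> c j \<le> l}"

lemma rows_nz: "i < n \<Longrightarrow> \<exists>j<k. M i j \<noteq> 0"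
proof -
  assume i: "i < n"
  then have "r i < m" using SurjA_lt[OF r] by simp
  then obtain j where "j < k" "c j = 0" using SurjA_ex[OF c, of 0] by auto
  then show ?thesis using i by (auto simp: Phi_val)
qed

lemma cols_nz: "j < k \<Longrightarrow> \<exists>i<n. M i j \<noteq> 0"
proof -
  assume j: "j < k"
  then obtain i where "i < n" "r i = c j" using SurjA_ex[OF r] SurjA_lt[OF c] by metis
  then show ?thesis using j by (auto simp: Phi_val)
qed

lemma coltype: "j < k \<Longrightarrow> {j'. j' < k \<and> same_col_type n M j j'} = {j'. j' < k \<and> c j' = c j}"
proof (rule set_eqI, rule iffI)
  fix j' assume j: "j < k" and "j' \<in> {j'. j' < k \<and> same_col_type n M j j'}"
  then have j': "j' < k" and st: "\<And>i. i < n \<Longrightarrow> M i j = M i j'" by (auto simp: same_col_type_def)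
  have "c j' = c j"
  proof (rule ccontr)
    assume ne: "c j' \<noteq> c j"
    show False
    proof (cases "c j' < c j")
      case True
      obtain i where "i < n" "r i = c j'" using SurjA_ex[OF r] SurjA_lt[OF c j'] by metis
      then show False using st[of i] True j j' by (auto simp: Phi_val)
    next
      case False
      obtain i where "i < n" "r i = c j" using SurjA_ex[OF r] SurjA_lt[OF c j] by metis
      then show False using st[of i] False ne j j' by (auto simp: Phi_val)
    qed
  qed
  then show "j' \<in> {j'. j' < k \<and> c j' = c j}" using j' by simp
next
  fix j' assume j: "j < k" and "j' \<in> {j'. j' < k \<and> c j' = c j}"
  then show "j' \<in> {j'. j' < k \<and> same_col_type n M j j'}" by (auto simp: same_col_type_def Phi_val)
qed

lemma rowtype: "i < n \<Longrightarrow> {i'. i' < n \<and> same_row_type k M i i'} = {i'. i' < n \<and> r i' = r i}"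
proof (rule set_eqI, rule iffI)
  fix i' assume i: "i < n" and "i' \<in> {i'. i' < n \<and> same_row_type k M i i'}"
  then have i': "i' < n" and st: "\<And>j. j < k \<Longrightarrow> M i j = M i' j" by (auto simp: same_row_type_def)
  have "r i' = r i"
  proof (rule ccontr)
    assume ne: "r i' \<noteq> r i"
    show False
    proof (cases "r i' < r i")
      case True
      obtain j where "j < k" "c j = r i" using SurjA_ex[OF c] SurjA_lt[OF r i] by metis
      then show False using st[of j] True i i' by (auto simp: Phi_val)
    next
      case False
      obtain j where "j < k" "c j = r i'" using SurjA_ex[OF c] SurjA_lt[OF r i'] by metis
      then show False using st[of j] False ne i i' by (auto simp: Phi_val)
    qed
  qed
  then show "i' \<in> {i'. i' < n \<and> r i' = r i}" using i' by simp
next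
  fix i' assume i: "i < n" and "i' \<in> {i'. i' < n \<and> r i' = r i}"
  then show "i' \<in> {i'. i' < n \<and> same_row_type k M i i'}" by (auto simp: same_row_type_def Phi_val)
qed

lemma rowset_T: "i < n \<Longrightarrow> rowset k M i = T (r i)"
  by (auto simp: rowset_def T_def Phi_val split: if_splits)

lemma Fam_T: "Fam n k M = T ` {0..<m}"
proof -
  have "Fam n k M = T ` r ` {0..<n}" unfolding Fam_def using rowset_T by (auto simp: image_image)
  also have "r ` {0..<n} = {0..<m}" using r by (simp add: SurjA_def)
  finally show ?thesis .
qed

lemma T_mono: "l \<le> l' \<Longrightarrow> T l \<subseteq> T l'"
  by (auto simp: T_def)

lemma T_strict: "l < l' \<Longrightarrow> l' < m \<Longrightarrow> T l \<subset> T l'"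
proof -
  assume a: "l < l'" "l' < m"
  obtain j where "j < k" "c j = l'" using SurjA_ex[OF c a(2)] by blast
  then have "j \<in> T l'" "j \<notin> T l" using a by (auto simp: T_def)
  then show ?thesis using T_mono[of l l'] a by auto
qed

lemma T_inj: "inj_on T {0..<m}"
proof (rule inj_onI)
  fix l l' assume "l \<in> {0..<m}" "l' \<in> {0..<m}" "T l = T l'"
  then show "l = l'" using T_strict[of l l'] T_strict[of l' l] by (metis atLeastLessThan_iff less_irrefl linorder_neqE_nat)
qed

lemma card_Fam: "card (Fam n k M) = m"
  using Fam_T T_inj by (simp add: card_image)

lemma rk_Phi: "i < n \<Longrightarrow> rk n k M (rowset k M i) = r i"
proof -
  assume i: "i < n"
  have ri: "r i < m" using SurjA_lt[OF r i] .
  have "{Y \<in> Fam n k M. Y \<subset> rowset k M i} = T ` {0..<r i}"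
  proof (rule set_eqI, rule iffI)
    fix Y assume "Y \<in> {Y \<in> Fam n k M. Y \<subset> rowset k M i}"
    then have Y: "Y \<in> T ` {0..<m}" "Y \<subset> T (r i)" using Fam_T rowset_T[OF i] by auto
    from Y(1) obtain l where l0: "Y = T l" "l \<in> {0..<m}" by (rule imageE)
    then have l: "l < m" "Y = T l" "T l \<subset> T (r i)" using Y(2) by auto
    have "l < r i"
    proof (rule ccontr)
      assume "\<not> l < r i"
      then have "T (r i) \<subseteq> T l" by (intro T_mono) simp
      then show False using l by auto
    qed
    then show "Y \<in> T ` {0..<r i}" using l by auto
  next
    fix Y assume "Y \<in> T ` {0..<r i}"
    then obtain l where l: "l < r i" "Y = T l" by auto
    then have "Y \<in> Fam n k M" using Fam_T ri by auto
    moreover have "Y \<subset> rowset k M i" using T_strict[OF l(1) ri] l rowset_T[OF i] by simp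
    ultimately show "Y \<in> {Y \<in> Fam n k M. Y \<subset> rowset k M i}" by simp
  qed
  moreover have "inj_on T {0..<r i}" by (rule inj_on_subset[OF T_inj]) (use ri in auto)
  ultimately show ?thesis unfolding rk_def by (simp add: card_image)
qed

lemma gm_Phi: "j < k \<Longrightarrow> gm n k M j = c j"
proof -
  assume j: "j < k"
  have cj: "c j < m" using SurjA_lt[OF c j] .
  have "{Y \<in> Fam n k M. j \<notin> Y} = T ` {0..<c j}"
  proof (rule set_eqI, rule iffI)
    fix Y assume "Y \<in> {Y \<in> Fam n k M. j \<notin> Y}"
    then obtain l where l: "l < m" "Y = T l" "j \<notin> T l" using Fam_T by auto
    then have "l < c j" using j by (auto simp: T_def)
    then show "Y \<in> T ` {0..<c j}" using l by auto
  next
    fix Y assume "Y \<in> T ` {0..<c j}"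
    then obtain l where l: "l < c j" "Y = T l" by auto
    then show "Y \<in> {Y \<in> Fam n k M. j \<notin> Y}" using Fam_T cj by (auto simp: T_def)
  qed
  moreover have "inj_on T {0..<c j}" by (rule inj_on_subset[OF T_inj]) (use cj in auto)
  ultimately show ?thesis unfolding gm_def by (simp add: card_image)
qed

lemma Psi_Phi: "Psi n k M = (m, r, c)"
proof -
  have "restrict (\<lambda>i. rk n k M (rowset k M i)) {0..<n} = r"
  proof
    fix i show "restrict (\<lambda>i. rk n k M (rowset k M i)) {0..<n} i = r i"
      using rk_Phi[of i] SurjA_ext[OF r, of i] by auto
  qed
  moreover have "restrict (gm n k M) {0..<k} = c"
  proof
    fix j show "restrict (gm n k M) {0..<k} j = c j"
      using gm_Phi[of j] SurjA_ext[OF c, of j] by auto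
  qed
  ultimately show ?thesis unfolding Psi_def using card_Fam by simp
qed

end



lemma sum_swap2:
  fixes f g :: "'a \<Rightarrow> nat"
  assumes "finite A" "a \<in> A" "b \<in> A" "a \<noteq> b"
    and "\<And>x. x \<in> A \<Longrightarrow> x \<noteq> a \<Longrightarrow> x \<noteq> b \<Longrightarrow> f x = g x"
    and "f a + f b = g a + g b"
  shows "sum f A = sum g A"
proof -
  have ba: "b \<in> A - {a}" using assms by simp
  have fA: "finite (A - {a})" using assms by simp
  have "sum f A = f a + (f b + sum f (A - {a} - {b}))"
    using sum.remove[OF assms(1,2), of f] sum.remove[OF fA ba, of f] by simp
  moreover have "sum g A = g a + (g b + sum g (A - {a} - {b}))"
    using sum.remove[OF assms(1,2), of g] sum.remove[OF fA ba, of g] by simp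
  moreover have "sum f (A - {a} - {b}) = sum g (A - {a} - {b})"
    using assms(5) by (intro sum.cong) auto
  ultimately show ?thesis using assms(6) by simp
qed

locale l_ctx =
  fixes d n k :: nat and M :: "nat \<Rightarrow> nat \<Rightarrow> nat"
  assumes LM: "M \<in> L_le d n k"
begin

lemma zo: "M \<in> zo_matrices n k" using LM by (simp add: L_le_def)
lemma lone: "lonesum n k M" using LM by (simp add: L_le_def)
lemma rnz: "i < n \<Longrightarrow> \<exists>j<k. M i j \<noteq> 0" using LM by (simp add: L_le_def)
lemma cnz: "j < k \<Longrightarrow> \<exists>i<n. M i j \<noteq> 0" using LM by (simp add: L_le_def)

lemma val: "i < n \<Longrightarrow> j < k \<Longrightarrow> M i j = 0 \<or> M i j = 1"
  using zo_val[OF zo] .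

lemma chain: "i < n \<Longrightarrow> i' < n \<Longrightarrow> rowset k M i \<subseteq> rowset k M i' \<or> rowset k M i' \<subseteq> rowset k M i"
proof (rule ccontr)
  assume i: "i < n" "i' < n" and
    nc: "\<not> (rowset k M i \<subseteq> rowset k M i' \<or> rowset k M i' \<subseteq> rowset k M i)"
  then obtain j j' where j: "j \<in> rowset k M i" "j \<notin> rowset k M i'"
    and j': "j' \<in> rowset k M i'" "j' \<notin> rowset k M i" by blast
  have jk: "j < k" "j' < k" using j j' by (auto simp: rowset_def)
  have v: "M i j = 1" "M i' j = 0" "M i' j' = 1" "M i j' = 0"
    using j j' jk val[OF i(1) jk(1)] val[OF i(2) jk(1)] val[OF i(1) jk(2)] val[OF i(2) jk(2)]
    by (auto simp: rowset_def)
  have ii: "i \<noteq> i'" and jj: "j \<noteq> j'" using v by auto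
  define N where "N = (\<lambda>a\<in>{0..<n}. \<lambda>b\<in>{0..<k}.
      if (a = i \<or> a = i') \<and> (b = j \<or> b = j') then 1 - M a b else M a b)"
  have Nv: "N a b = (if (a = i \<or> a = i') \<and> (b = j \<or> b = j') then 1 - M a b else M a b)"
    if "a < n" "b < k" for a b using that by (simp add: N_def)
  have Nzo: "N \<in> zo_matrices n k"
    unfolding zo_matrices_def N_def using val by (auto simp: PiE_iff)
  have rows: "row_sums k N a = row_sums k M a" if a: "a < n" for a
  proof (cases "a = i \<or> a = i'")
    case True
    show ?thesis unfolding row_sums_def
    proof (rule sum_swap2[of _ j j'])
      show "finite {..<k}" "j \<in> {..<k}" "j' \<in> {..<k}" "j \<noteq> j'" using jk jj by auto
      show "N a x = M a x" if "x \<in> {..<k}" "x \<noteq> j" "x \<noteq> j'" for x using that a Nv by simp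
      show "N a j + N a j' = M a j + M a j'" using True v a jk Nv by auto
    qed
  next
    case False
    then show ?thesis unfolding row_sums_def using a Nv by (intro sum.cong) auto
  qed
  have cols: "col_sums n N b = col_sums n M b" if b: "b < k" for b
  proof (cases "b = j \<or> b = j'")
    case True
    show ?thesis unfolding col_sums_def
    proof (rule sum_swap2[of _ i i'])
      show "finite {..<n}" "i \<in> {..<n}" "i' \<in> {..<n}" "i \<noteq> i'" using i ii by auto
      show "N x b = M x b" if "x \<in> {..<n}" "x \<noteq> i" "x \<noteq> i'" for x using that b Nv by simp
      show "N i b + N i' b = M i b + M i' b" using True v b i Nv by auto
    qed
  next
    case False
    then show ?thesis unfolding col_sums_def using b Nv by (intro sum.cong) auto
  qed
  have "N = M" using lone Nzo rows cols unfolding lonesum_def by blast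
  moreover have "N i j = 0" using Nv[OF i(1) jk(1)] v by simp
  ultimately show False using v by simp
qed

abbreviation "F \<equiv> Fam n k M"
abbreviation "S \<equiv> rowset k M"
abbreviation "rr \<equiv> rk n k M"
abbreviation "gg \<equiv> gm n k M"

lemma F_chain: "X \<in> F \<Longrightarrow> Y \<in> F \<Longrightarrow> X \<subseteq> Y \<or> Y \<subseteq> X"
proof -
  assume "X \<in> F" "Y \<in> F"
  then obtain i i' where "i < n" "X = S i" "i' < n" "Y = S i'" unfolding Fam_def by auto
  then show ?thesis using chain by blast
qed

lemma F_sub: "X \<in> F \<Longrightarrow> X \<subseteq> {0..<k}"
  unfolding Fam_def by (auto simp: rowset_def)

lemma F_ne: "X \<in> F \<Longrightarrow> X \<noteq> {}"
proof -
  assume "X \<in> F"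
  then obtain i where i: "i < n" "X = S i" unfolding Fam_def by auto
  obtain j where "j < k" "M i j \<noteq> 0" using rnz[OF i(1)] by blast
  then have "j \<in> X" using i by (simp add: rowset_def)
  then show ?thesis by blast
qed

lemma rk_lt: "X \<in> F \<Longrightarrow> rr X < card F"
proof -
  assume X: "X \<in> F"
  have "{Y \<in> F. Y \<subset> X} \<subset> F" using X by blast
  then show ?thesis unfolding rk_def by (rule psubset_card_mono[OF finite_Fam])
qed

lemma rk_strict: "X \<in> F \<Longrightarrow> Y \<in> F \<Longrightarrow> X \<subset> Y \<Longrightarrow> rr X < rr Y"
proof -
  assume X: "X \<in> F" and Y: "Y \<in> F" and XY: "X \<subset> Y"
  have "{Z \<in> F. Z \<subset> X} \<subset> {Z \<in> F. Z \<subset> Y}"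
  proof
    show "{Z \<in> F. Z \<subset> X} \<subseteq> {Z \<in> F. Z \<subset> Y}" using XY by blast
    show "{Z \<in> F. Z \<subset> X} \<noteq> {Z \<in> F. Z \<subset> Y}" using X XY by blast
  qed
  then show ?thesis unfolding rk_def by (rule psubset_card_mono[rotated]) (simp add: finite_Fam)
qed

lemma rk_inj: "inj_on rr F"
proof (rule inj_onI)
  fix X Y assume X: "X \<in> F" and Y: "Y \<in> F" and e: "rr X = rr Y"
  show "X = Y"
  proof (rule ccontr)
    assume "X \<noteq> Y"
    then have "X \<subset> Y \<or> Y \<subset> X" using F_chain[OF X Y] by blast
    then show False using rk_strict[OF X Y] rk_strict[OF Y X] e by auto
  qed
qed

lemma rk_img: "rr ` F = {0..<card F}"
proof (rule card_subset_eq)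
  show "finite {0..<card F}" by simp
  show "rr ` F \<subseteq> {0..<card F}" using rk_lt by auto
  show "card (rr ` F) = card {0..<card F}" using rk_inj by (simp add: card_image)
qed

lemma gm_lt: "j < k \<Longrightarrow> gg j < card F"
proof -
  assume j: "j < k"
  obtain i where "i < n" "M i j \<noteq> 0" using cnz[OF j] by blast
  then have SF: "S i \<in> F" and js: "j \<in> S i" using j by (auto simp: Fam_def rowset_def)
  have "{Y \<in> F. j \<notin> Y} \<subset> F" using SF js by blast
  then show ?thesis unfolding gm_def by (rule psubset_card_mono[OF finite_Fam])
qed

lemma gm_hit: "X \<in> F \<Longrightarrow> \<exists>j<k. gg j = rr X"
proof -
  assume X: "X \<in> F"
  define B where "B = {Y \<in> F. Y \<subset> X}"
  have ex: "\<exists>j. j \<in> X \<and> j \<notin> \<Union>B"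
  proof (cases "B = {}")
    case True then show ?thesis using F_ne[OF X] by auto
  next
    case False
    have "finite B" unfolding B_def using finite_Fam by simp
    moreover have "subset.chain UNIV B" unfolding subset_chain_def B_def using F_chain by auto
    ultimately have "\<Union>B \<in> B" using False Union_in_chain by blast
    then have "\<Union>B \<subset> X" unfolding B_def by simp
    then show ?thesis by auto
  qed
  then obtain j where j: "j \<in> X" "j \<notin> \<Union>B" by blast
  have jk: "j < k" using F_sub[OF X] j by auto
  have "{Y \<in> F. j \<notin> Y} = B"
  proof (rule set_eqI, rule iffI)
    fix Y assume Y: "Y \<in> {Y \<in> F. j \<notin> Y}"
    then have "Y \<subseteq> X" using F_chain[OF X, of Y] j by auto
    then show "Y \<in> B" using Y j unfolding B_def by auto
  next
    fix Y assume "Y \<in> B" then show "Y \<in> {Y \<in> F. j \<notin> Y}" using j unfolding B_def by auto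
  qed
  then have "gg j = rr X" unfolding gm_def rk_def B_def by simp
  then show ?thesis using jk by blast
qed

definition "mm = card F"
definition "r0 = restrict (\<lambda>i. rr (S i)) {0..<n}"
definition "c0 = restrict gg {0..<k}"

lemma Psi_eq: "Psi n k M = (mm, r0, c0)"
  by (simp add: Psi_def mm_def r0_def c0_def)

lemma r0_surj: "SurjA n mm r0"
proof -
  have img: "r0 ` {0..<n} = rr ` F" unfolding r0_def Fam_def by (auto simp: image_image)
  show ?thesis unfolding SurjA_def
  proof
    show "r0 \<in> {0..<n} \<rightarrow>\<^sub>E {0..<mm}" unfolding r0_def mm_def using rk_lt by (auto simp: Fam_def)
    show "r0 ` {0..<n} = {0..<mm}" using img rk_img mm_def by simp
  qed
qed

lemma c0_surj: "SurjA k mm c0"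
  unfolding SurjA_def
proof
  show "c0 \<in> {0..<k} \<rightarrow>\<^sub>E {0..<mm}" unfolding c0_def mm_def using gm_lt by auto
  show "c0 ` {0..<k} = {0..<mm}"
  proof
    show "c0 ` {0..<k} \<subseteq> {0..<mm}" unfolding c0_def mm_def using gm_lt by auto
    show "{0..<mm} \<subseteq> c0 ` {0..<k}"
    proof
      fix l assume "l \<in> {0..<mm}"
      then obtain X where X: "X \<in> F" "rr X = l" using rk_img mm_def by (metis imageE)
      obtain j where "j < k" "gg j = l" using gm_hit[OF X(1)] X(2) by blast
      then show "l \<in> c0 ` {0..<k}" unfolding c0_def by force
    qed
  qed
qed

lemma M_Phi: "M = Phi n k r0 c0"
proof (rule zo_eqI[OF zo Phi_zo])
  fix i j assume i: "i < n" and j: "j < k"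
  have SF: "S i \<in> F" using i by (simp add: Fam_def)
  show "M i j = Phi n k r0 c0 i j"
  proof (cases "M i j = 0")
    case False
    then have Mij: "M i j = 1" using val[OF i j] by simp
    have js: "j \<in> S i" using False j by (simp add: rowset_def)
    have "{Y \<in> F. j \<notin> Y} \<subseteq> {Y \<in> F. Y \<subset> S i}"
      using F_chain[OF SF] js by auto
    then have "gg j \<le> rr (S i)" unfolding gm_def rk_def by (intro card_mono) (auto simp: finite_Fam)
    then show ?thesis using Mij i j by (simp add: Phi_val r0_def c0_def)
  next
    case True
    have js: "j \<notin> S i" using True by (simp add: rowset_def)
    have "{Y \<in> F. Y \<subset> S i} \<subset> {Y \<in> F. j \<notin> Y}"
      using js SF by auto
    then have "rr (S i) < gg j" unfolding gm_def rk_def by (intro psubset_card_mono) (auto simp: finite_Fam)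
    then show ?thesis using True i j by (simp add: Phi_val r0_def c0_def)
  qed
qed

end


lemma Surj_iff: "f \<in> Surj d n m \<longleftrightarrow> SurjA n m f \<and> (\<forall>l<m. card {i. i < n \<and> f i = l} \<le> d)"
  unfolding Surj_def SurjA_def by auto

lemma finite_Surj: "finite (Surj d n m)"
proof -
  have "Surj d n m \<subseteq> {0..<n} \<rightarrow>\<^sub>E {0..<m}" unfolding Surj_def by auto
  then show ?thesis by (rule finite_subset) (simp add: finite_PiE)
qed

lemma Phi_in_L:
  assumes r: "r \<in> Surj d n m" and c: "c \<in> Surj d k m"
  shows "Phi n k r c \<in> L_le d n k"
proof -
  have rs: "SurjA n m r" and rb: "\<forall>l<m. card {i. i < n \<and> r i = l} \<le> d" using r by (auto simp: Surj_iff)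
  have cs: "SurjA k m c" and cb: "\<forall>l<m. card {i. i < k \<and> c i = l} \<le> d" using c by (auto simp: Surj_iff)
  interpret phi_ctx n k m r c by unfold_locales (rule rs, rule cs)
  have "\<forall>j<k. card {j'. j' < k \<and> same_col_type n M j j'} \<le> d"
  proof (intro allI impI)
    fix j assume j: "j < k"
    show "card {j'. j' < k \<and> same_col_type n M j j'} \<le> d"
      using coltype[OF j] cb SurjA_lt[OF cs j] by simp
  qed
  moreover have "\<forall>i<n. card {i'. i' < n \<and> same_row_type k M i i'} \<le> d"
  proof (intro allI impI)
    fix i assume i: "i < n"
    show "card {i'. i' < n \<and> same_row_type k M i i'} \<le> d"
      using rowtype[OF i] rb SurjA_lt[OF rs i] by simp
  qed
  ultimately show ?thesis unfolding L_le_def using Phi_zo Phi_lonesum rows_nz cols_nz by blast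
qed

lemma Psi_in_Sig:
  assumes LM': "M \<in> L_le d n k"
  shows "Psi n k M \<in> (SIGMA m:{0..min n k}. Surj d n m \<times> Surj d k m)"
proof -
  interpret l_ctx d n k M by unfold_locales (rule LM')
  interpret p: phi_ctx n k mm r0 c0 by unfold_locales (rule r0_surj, rule c0_surj)
  have rb: "\<forall>l<mm. card {i. i < n \<and> r0 i = l} \<le> d"
  proof (intro allI impI)
    fix l assume l: "l < mm"
    obtain i where i: "i < n" "r0 i = l" using SurjA_ex[OF r0_surj l] by blast
    have "{i'. i' < n \<and> r0 i' = l} = {i'. i' < n \<and> same_row_type k M i i'}"
      using p.rowtype[OF i(1)] i(2) M_Phi by simp
    then show "card {i. i < n \<and> r0 i = l} \<le> d" using LM' i(1) by (simp add: L_le_def)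
  qed
  have cb: "\<forall>l<mm. card {j. j < k \<and> c0 j = l} \<le> d"
  proof (intro allI impI)
    fix l assume l: "l < mm"
    obtain j where j: "j < k" "c0 j = l" using SurjA_ex[OF c0_surj l] by blast
    have "{j'. j' < k \<and> c0 j' = l} = {j'. j' < k \<and> same_col_type n M j j'}"
      using p.coltype[OF j(1)] j(2) M_Phi by simp
    then show "card {j. j < k \<and> c0 j = l} \<le> d" using LM' j(1) by (simp add: L_le_def)
  qed
  have "mm = card (r0 ` {0..<n})" using r0_surj by (simp add: SurjA_def)
  also have "\<dots> \<le> n" using card_image_le[of "{0..<n}" r0] by simp
  finally have mn: "mm \<le> n" .
  have "mm = card (c0 ` {0..<k})" using c0_surj by (simp add: SurjA_def)
  also have "\<dots> \<le> k" using card_image_le[of "{0..<k}" c0] by simp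
  finally have mk: "mm \<le> k" .
  show ?thesis using Psi_eq mn mk rb cb r0_surj c0_surj by (simp add: Surj_iff)
qed

lemma Phi_Psi:
  assumes LM': "M \<in> L_le d n k"
  shows "(case Psi n k M of (m, r, c) \<Rightarrow> Phi n k r c) = M"
proof -
  interpret l_ctx d n k M by unfold_locales (rule LM')
  show ?thesis using Psi_eq M_Phi by simp
qed

lemma Psi_Phi':
  assumes "x \<in> (SIGMA m:{0..min n k}. Surj d n m \<times> Surj d k m)"
  shows "Psi n k (case x of (m, r, c) \<Rightarrow> Phi n k r c) = x"
proof -
  obtain m r c where x: "x = (m, r, c)" and r: "r \<in> Surj d n m" and c: "c \<in> Surj d k m"
    using assms by auto
  interpret phi_ctx n k m r c by unfold_locales (use r c in \<open>auto simp: Surj_iff\<close>)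
  show ?thesis using x Psi_Phi by simp
qed

theorem theorem2:
  fixes d n k :: nat
  assumes "d \<ge> 1"
  shows "card (L_le d n k) =
    (\<Sum>m = 0..min n k. fact m * stirling_le d n m * (fact m * stirling_le d k m))"
proof -
  let ?Sig = "SIGMA m:{0..min n k}. Surj d n m \<times> Surj d k m"
  let ?f = "\<lambda>x. case x of (m, r, c) \<Rightarrow> Phi n k r c"
  have "bij_betw ?f ?Sig (L_le d n k)"
  proof (rule bij_betw_byWitness[where f' = "Psi n k"])
    show "\<forall>a\<in>?Sig. Psi n k (?f a) = a" using Psi_Phi' by blast
    show "\<forall>a'\<in>L_le d n k. ?f (Psi n k a') = a'" using Phi_Psi by blast
    show "?f ` ?Sig \<subseteq> L_le d n k"
    proof
      fix y assume "y \<in> ?f ` ?Sig"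
      then obtain m r c where "y = Phi n k r c" "r \<in> Surj d n m" "c \<in> Surj d k m" by auto
      then show "y \<in> L_le d n k" using Phi_in_L by simp
    qed
    show "Psi n k ` L_le d n k \<subseteq> ?Sig" using Psi_in_Sig by blast
  qed
  then have "card (L_le d n k) = card ?Sig" by (simp add: bij_betw_same_card)
  also have "\<dots> = (\<Sum>m = 0..min n k. card (Surj d n m \<times> Surj d k m))"
    by (rule card_SigmaI) (auto simp: finite_Surj)
  also have "\<dots> = (\<Sum>m = 0..min n k. fact m * stirling_le d n m * (fact m * stirling_le d k m))"
    by (simp add: card_cartesian_product card_Surj)
  finally show ?thesis .
qed

end
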